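(* Let $F$ be a field of characteristic $0$, $V$ an $n$-dimensional $F$-vector space, $G\le\mathrm{GL}(V)$ a finite group generated by pseudo-reflections, and $M$ an $r$-dimensional $F[G]$-module. For all $1\le i,j\le r$ there is $L_{ij}\in\mathrm{S}(V)^G$ such that, as operators on $\mathrm{S}(V^* )\otimes\wedge M^*$, \[ d_i^*\delta_j^*+\delta_j^*d_i^*=\partial_{L_{ij}}. \]
   Context: $G$ acts contragrediently on $V^*,M^*$ and diagonally on tensor products of symmetric algebras $\mathrm{S}(\cdot)$ and exterior algebras $\wedge(\cdot)$. $(\mathrm{S}(V)\otimes M^* )^G$ is a free $\mathrm{S}(V)^G$-module with homogeneous basis $\tilde\omega_1^{M^*},\dots,\tilde\omega_r^{M^*}$, and $(\mathrm{S}(V)\otimes M)^G$ is a free $\mathrm{S}(V)^G$-module with homogeneous basis $\tilde\omega_1^{M},\dots,\tilde\omega_r^{M}$. For $s\in\mathrm{S}(V)$, $\partial_s$ is the constant-coefficient differential operator on $\mathrm{S}(V^* )$ ($\partial_v$ for $v\in V$ is the derivation with $\partial_v\lambda=\lambda(v)$ for $\lambda\in V^*$, extended multiplicatively in $s$), acting on $\mathrm{S}(V^* )\otimes\wedge M^*$ as $\partial_s\otimes\mathrm{id}$. For $\mu\in M^*$, $\epsilon_\mu$ is left exterior multiplication on $\wedge M^*$; for $m\in M$, $\iota_m$ is the interior product, the anti-derivation of $\wedge M^*$ with $\iota_m(\xi)=\xi(m)$ for $\xi\in M^*$. If $\tilde\omega_i^{M^*}=\sum_k s_k\otimes\mu_k$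 then $d_i^*=\sum_k\partial_{s_k}\otimes\epsilon_{\mu_k}$; if $\tilde\omega_j^{M}=\sum_k t_k\otimes m_k$ then $\delta_j^*=\sum_k\partial_{t_k}\otimes\iota_{m_k}$. *)

theory Defs
  imports Main "HOL-Library.Poly_Mapping"
begin

text \<open>V has basis e_k (k :: 'n, a finite type, n = CARD('n)), so
S(V) = F[e_k] and S(V^*) = F[e^*_k]; both are modelled by the polynomial ring
('n \<Rightarrow>0 nat) \<Rightarrow>0 'a. M has basis b_k (k :: 'm, r = CARD('m)), M^* has the dual
basis b^*_k. Elements of S(V) (x) M and S(V) (x) M^* are coefficient families
'm \<Rightarrow> poly; elements of S(V^*) (x) \<wedge>M^* are families 'm set \<Rightarrow> poly
(coefficient of b^*_{i1} \<and> ... \<and> b^*_{ip}, i1 < ... < ip).\<close>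

type_synonym ('n, 'a) spoly = "('n \<Rightarrow>\<^sub>0 nat) \<Rightarrow>\<^sub>0 'a"

definition const :: "'a::comm_ring_1 \<Rightarrow> ('n, 'a) spoly" where
  "const c = Poly_Mapping.single 0 c"

definition var :: "'n \<Rightarrow> ('n, 'a::comm_ring_1) spoly" where
  "var k = Poly_Mapping.single (Poly_Mapping.single k 1) 1"

text \<open>Matrices (linear maps w.r.t. the fixed bases): g i j = i-th coordinate of g(e_j).\<close>

definition mid :: "'n \<Rightarrow> 'n \<Rightarrow> 'a::comm_ring_1" where
  "mid i j = (if i = j then 1 else 0)"

definition mmult :: "('n \<Rightarrow> 'n \<Rightarrow> 'a::comm_ring_1) \<Rightarrow> ('n \<Rightarrow> 'n \<Rightarrow> 'a) \<Rightarrow> ('n::finite \<Rightarrow> 'n \<Rightarrow> 'a)" where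
  "mmult A B i j = (\<Sum>l\<in>UNIV. A i l * B l j)"

definition matrix_group :: "('n::finite \<Rightarrow> 'n \<Rightarrow> 'a::field) set \<Rightarrow> bool" where
  "matrix_group G \<longleftrightarrow> mid \<in> G \<and> (\<forall>g\<in>G. \<forall>h\<in>G. mmult g h \<in> G)
      \<and> (\<forall>g\<in>G. \<exists>h\<in>G. mmult g h = mid \<and> mmult h g = mid)"

definition ginv :: "('n::finite \<Rightarrow> 'n \<Rightarrow> 'a::field) set \<Rightarrow> ('n \<Rightarrow> 'n \<Rightarrow> 'a) \<Rightarrow> ('n \<Rightarrow> 'n \<Rightarrow> 'a)" where
  "ginv G g = (THE h. h \<in> G \<and> mmult g h = mid \<and> mmult h g = mid)"

text \<open>Pseudo-reflection: g - 1 has rank one, i.e. g = 1 + a \<phi>^T with a, \<phi> nonzero.\<close>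

definition pseudo_reflection :: "('n \<Rightarrow> 'n \<Rightarrow> 'a::field) \<Rightarrow> bool" where
  "pseudo_reflection g \<longleftrightarrow> (\<exists>a \<phi>. (\<exists>i. a i \<noteq> 0) \<and> (\<exists>j. \<phi> j \<noteq> 0) \<and> (\<forall>i j. g i j = mid i j + a i * \<phi> j))"

text \<open>Submonoid generated by a set (equals the generated subgroup for finite groups).\<close>

inductive_set generated :: "('n \<Rightarrow> 'n \<Rightarrow> 'a::comm_ring_1) set \<Rightarrow> ('n::finite \<Rightarrow> 'n \<Rightarrow> 'a) set"
  for R where
  gen_one: "mid \<in> generated R"
| gen_mult: "g \<in> R \<Longrightarrow> h \<in> generated R \<Longrightarrow> mmult g h \<in> generated R"

text \<open>Representation of G on M = F^r: rho g k l = k-th coordinate of g(b_l).\<close>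

definition representation :: "('n::finite \<Rightarrow> 'n \<Rightarrow> 'a::field) set \<Rightarrow> (('n \<Rightarrow> 'n \<Rightarrow> 'a) \<Rightarrow> ('m::finite \<Rightarrow> 'm \<Rightarrow> 'a)) \<Rightarrow> bool" where
  "representation G \<rho> \<longleftrightarrow> \<rho> mid = mid \<and> (\<forall>g\<in>G. \<forall>h\<in>G. \<rho> (mmult g h) = mmult (\<rho> g) (\<rho> h))"

definition actS :: "('n::finite \<Rightarrow> 'n \<Rightarrow> 'a::comm_ring_1) \<Rightarrow> ('n, 'a) spoly \<Rightarrow> ('n, 'a) spoly" where
  "actS g p = (\<Sum>u\<in>Poly_Mapping.keys p. const (Poly_Mapping.lookup p u) *
       (\<Prod>k\<in>UNIV. (\<Sum>l\<in>UNIV. const (g l k) * var l) ^ Poly_Mapping.lookup u k))"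

definition invariants :: "('n::finite \<Rightarrow> 'n \<Rightarrow> 'a::comm_ring_1) set \<Rightarrow> ('n, 'a) spoly set" where
  "invariants G = {p. \<forall>g\<in>G. actS g p = p}"

definition actSM :: "(('n \<Rightarrow> 'n \<Rightarrow> 'a) \<Rightarrow> ('m::finite \<Rightarrow> 'm \<Rightarrow> 'a)) \<Rightarrow> ('n::finite \<Rightarrow> 'n \<Rightarrow> 'a::field)
      \<Rightarrow> ('m \<Rightarrow> ('n, 'a) spoly) \<Rightarrow> ('m \<Rightarrow> ('n, 'a) spoly)" where
  "actSM \<rho> g t = (\<lambda>l. \<Sum>k\<in>UNIV. const (\<rho> g l k) * actS g (t k))"

text \<open>Diagonal action on S(V) (x) M^* (contragredient on M^*):
  g b^*_k = \<Sum>_l \<rho>(g^{-1}) k l b^*_l.\<close>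

definition actSMd :: "('n::finite \<Rightarrow> 'n \<Rightarrow> 'a::field) set \<Rightarrow> (('n \<Rightarrow> 'n \<Rightarrow> 'a) \<Rightarrow> ('m::finite \<Rightarrow> 'm \<Rightarrow> 'a))
      \<Rightarrow> ('n \<Rightarrow> 'n \<Rightarrow> 'a) \<Rightarrow> ('m \<Rightarrow> ('n, 'a) spoly) \<Rightarrow> ('m \<Rightarrow> ('n, 'a) spoly)" where
  "actSMd G \<rho> g s = (\<lambda>l. \<Sum>k\<in>UNIV. const (\<rho> (ginv G g) k l) * actS g (s k))"

definition homogeneous :: "('n::finite, 'a::comm_ring_1) spoly \<Rightarrow> nat \<Rightarrow> bool" where
  "homogeneous p d \<longleftrightarrow> (\<forall>u\<in>Poly_Mapping.keys p. (\<Sum>k\<in>UNIV. Poly_Mapping.lookup u k) = d)"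

definition homogeneous_basis :: "('n::finite, 'a::comm_ring_1) spoly set \<Rightarrow> ('m \<Rightarrow> ('n, 'a) spoly) set
     \<Rightarrow> ('m::finite \<Rightarrow> 'm \<Rightarrow> ('n, 'a) spoly) \<Rightarrow> bool" where
  "homogeneous_basis R X \<omega> \<longleftrightarrow>
     (\<forall>i. \<omega> i \<in> X) \<and> (\<forall>i. \<exists>d. \<forall>k. homogeneous (\<omega> i k) d) \<and>
     (\<forall>x\<in>X. \<exists>!c. (\<forall>i. c i \<in> R) \<and> x = (\<lambda>k. \<Sum>i\<in>UNIV. c i * \<omega> i k))"

text \<open>Constant-coefficient differential operators on S(V^*): \<partial>_{e_k} = d/d e^*_k, and
\<partial>_{e^u} applied to the monomial (e^*)^w gives \<Prod>_k w_k!/(w_k-u_k)! (e^*)^(w-u) if u \<le> w, else 0.\<close>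

definition dmono :: "('n::finite \<Rightarrow>\<^sub>0 nat) \<Rightarrow> ('n, 'a::field_char_0) spoly \<Rightarrow> ('n, 'a) spoly" where
  "dmono u p = (\<Sum>w\<in>Poly_Mapping.keys p.
      if (\<forall>k. Poly_Mapping.lookup u k \<le> Poly_Mapping.lookup w k)
      then Poly_Mapping.single (w - u) (Poly_Mapping.lookup p w *
             (\<Prod>k\<in>UNIV. of_nat (fact (Poly_Mapping.lookup w k)) /
                           of_nat (fact (Poly_Mapping.lookup w k - Poly_Mapping.lookup u k))))
      else 0)"

definition dop :: "('n::finite, 'a::field_char_0) spoly \<Rightarrow> ('n, 'a) spoly \<Rightarrow> ('n, 'a) spoly" where
  "dop s p = (\<Sum>u\<in>Poly_Mapping.keys s. const (Poly_Mapping.lookup s u) * dmono u p)"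

text \<open>Exterior algebra \<wedge>M^* with basis b^*_I, I \<subseteq> 'm (ordered increasingly).\<close>

definition esign :: "'m::{finite,linorder} \<Rightarrow> 'm set \<Rightarrow> ('n, 'a::comm_ring_1) spoly" where
  "esign k I = (- 1) ^ card {l\<in>I. l < k}"

text \<open>\<partial>_s (x) \<epsilon>_{b^*_k}, where \<epsilon>_{b^*_k} b^*_I = esign k I b^*_{I \<union> {k}} if k \<notin> I, else 0.\<close>

definition op_eps :: "('n::finite, 'a::field_char_0) spoly \<Rightarrow> 'm::{finite,linorder}
     \<Rightarrow> ('m set \<Rightarrow> ('n, 'a) spoly) \<Rightarrow> ('m set \<Rightarrow> ('n, 'a) spoly)" where
  "op_eps s k x = (\<lambda>J. if k \<in> J then esign k (J - {k}) * dop s (x (J - {k})) else 0)"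

text \<open>\<partial>_t (x) \<iota>_{b_k}, where \<iota>_{b_k} b^*_I = esign k I b^*_{I - {k}} if k \<in> I, else 0.\<close>

definition op_iota :: "('n::finite, 'a::field_char_0) spoly \<Rightarrow> 'm::{finite,linorder}
     \<Rightarrow> ('m set \<Rightarrow> ('n, 'a) spoly) \<Rightarrow> ('m set \<Rightarrow> ('n, 'a) spoly)" where
  "op_iota t k x = (\<lambda>J. if k \<notin> J then esign k J * dop t (x (insert k J)) else 0)"

text \<open>d_i^* = \<Sum>_k \<partial>_{s_k} (x) \<epsilon>_{b^*_k} for \<omega>_i^{M^*} = \<Sum>_k s_k (x) b^*_k;
      \<delta>_j^* = \<Sum>_k \<partial>_{t_k} (x) \<iota>_{b_k} for \<omega>_j^M = \<Sum>_k t_k (x) b_k.\<close>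

definition dstar :: "('m::{finite,linorder} \<Rightarrow> ('n::finite, 'a::field_char_0) spoly)
     \<Rightarrow> ('m set \<Rightarrow> ('n, 'a) spoly) \<Rightarrow> ('m set \<Rightarrow> ('n, 'a) spoly)" where
  "dstar s x = (\<lambda>J. \<Sum>k\<in>UNIV. op_eps (s k) k x J)"

definition deltastar :: "('m::{finite,linorder} \<Rightarrow> ('n::finite, 'a::field_char_0) spoly)
     \<Rightarrow> ('m set \<Rightarrow> ('n, 'a) spoly) \<Rightarrow> ('m set \<Rightarrow> ('n, 'a) spoly)" where
  "deltastar t x = (\<lambda>J. \<Sum>k\<in>UNIV. op_iota (t k) k x J)"

end

theory Submission
  imports Defs
begin


lemma sum_single_expand: "(p::'k \<Rightarrow>\<^sub>0 'b::comm_monoid_add) = (\<Sum>w\<in>Poly_Mapping.keys p. Poly_Mapping.single w (Poly_Mapping.lookup p w))"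
proof (rule poly_mapping_eqI)
  fix k
  show "Poly_Mapping.lookup p k = Poly_Mapping.lookup (\<Sum>w\<in>Poly_Mapping.keys p. Poly_Mapping.single w (Poly_Mapping.lookup p w)) k"
    by (cases "k \<in> Poly_Mapping.keys p")
       (auto simp: lookup_sum lookup_single when_def in_keys_iff)
qed

definition additive :: "(('k \<Rightarrow>\<^sub>0 'b::comm_monoid_add) \<Rightarrow> 'c::cancel_comm_monoid_add) \<Rightarrow> bool" where
  "additive f \<longleftrightarrow> (\<forall>p q. f (p + q) = f p + f q)"

lemma additive_zero: "additive f \<Longrightarrow> f 0 = 0"
  unfolding additive_def by (metis add.right_neutral add_left_cancel)

lemma additive_sum: "additive f \<Longrightarrow> f (sum h A) = (\<Sum>a\<in>A. f (h a))"
  by (induction A rule: infinite_finite_induct) (auto simp: additive_zero additive_def)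

lemma additive_ext:
  assumes "additive f" "additive g" "\<And>w a. f (Poly_Mapping.single w a) = g (Poly_Mapping.single w a)"
  shows "f p = g p"
proof -
  have "f p = f (\<Sum>w\<in>Poly_Mapping.keys p. Poly_Mapping.single w (Poly_Mapping.lookup p w))"
    by (subst sum_single_expand) simp
  also have "\<dots> = g (\<Sum>w\<in>Poly_Mapping.keys p. Poly_Mapping.single w (Poly_Mapping.lookup p w))"
    using assms by (simp add: additive_sum)
  also have "\<dots> = g p" by (subst (2) sum_single_expand) simp
  finally show ?thesis .
qed

lemma lin_add:
  fixes F :: "'k \<Rightarrow> 'b::comm_monoid_add \<Rightarrow> 'c::comm_monoid_add"
  assumes "\<And>w. F w 0 = 0" "\<And>w a b. F w (a+b) = F w a + F w b"
  shows "(\<Sum>w\<in>Poly_Mapping.keys (p+q). F w (Poly_Mapping.lookup (p+q) w)) =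
     (\<Sum>w\<in>Poly_Mapping.keys p. F w (Poly_Mapping.lookup p w)) + (\<Sum>w\<in>Poly_Mapping.keys q. F w (Poly_Mapping.lookup q w))"
proof -
  let ?S = "Poly_Mapping.keys p \<union> Poly_Mapping.keys q"
  have fin: "finite ?S" by simp
  have e: "(\<Sum>w\<in>Poly_Mapping.keys r. F w (Poly_Mapping.lookup r w)) = (\<Sum>w\<in>?S. F w (Poly_Mapping.lookup r w))"
    if "Poly_Mapping.keys r \<subseteq> ?S" for r
    by (rule sum.mono_neutral_left[OF fin that]) (auto simp: assms(1) in_keys_iff)
  show ?thesis
    apply (subst e, rule keys_add)
    apply (subst e, blast)
    apply (subst e, blast)
    by (simp add: lookup_add assms(2) sum.distrib)
qed

lemma lin_single:
  fixes F :: "'k \<Rightarrow> 'b::comm_monoid_add \<Rightarrow> 'c::comm_monoid_add"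
  assumes "\<And>w. F w 0 = 0"
  shows "(\<Sum>v\<in>Poly_Mapping.keys (Poly_Mapping.single w a). F v (Poly_Mapping.lookup (Poly_Mapping.single w a) v)) = F w a"
  using assms by simp

lemma const_add: "const (a + b) = (const a + const b :: ('n,'a::comm_ring_1) spoly)"
  by (simp add: const_def single_add)
lemma const_mult: "const (a * b) = (const a * const b :: ('n,'a::comm_ring_1) spoly)"
  by (simp add: const_def mult_single)
lemma const_0[simp]: "const 0 = 0" by (simp add: const_def)
lemma const_1[simp]: "const 1 = 1" by (simp add: const_def)
lemma const_sum: "const (sum f A) = (\<Sum>a\<in>A. const (f a) :: ('n,'a::comm_ring_1) spoly)"
  by (induction A rule: infinite_finite_induct) (auto simp: const_add)
lemma const_mult_single: "const c * Poly_Mapping.single w a = Poly_Mapping.single w (c * a)"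
  by (simp add: const_def mult_single)


definition monoS :: "('n::finite \<Rightarrow> 'n \<Rightarrow> 'a::comm_ring_1) \<Rightarrow> ('n \<Rightarrow>\<^sub>0 nat) \<Rightarrow> ('n, 'a) spoly" where
  "monoS g u = (\<Prod>k\<in>UNIV. (\<Sum>l\<in>UNIV. const (g l k) * var l) ^ Poly_Mapping.lookup u k)"

lemma actS_alt: "actS g p = (\<Sum>u\<in>Poly_Mapping.keys p. const (Poly_Mapping.lookup p u) * monoS g u)"
  by (simp add: actS_def monoS_def)

lemma actS_additive: "additive (actS g)"
  unfolding additive_def actS_alt
  by (intro allI lin_add) (auto simp: const_add distrib_right)

lemma actS_single: "actS g (Poly_Mapping.single w a) = const a * monoS g w"
  unfolding actS_alt by (subst lin_single) auto

lemma monoS_add: "monoS g (u + v) = monoS g u * monoS g v"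
  by (simp add: monoS_def lookup_add power_add prod.distrib)

lemma additive_mult_right: "additive (\<lambda>p. (p * q :: ('k::comm_monoid_add \<Rightarrow>\<^sub>0 'b::comm_ring_1)))"
  by (simp add: additive_def distrib_right)
lemma additive_mult_left: "additive (\<lambda>p. (q * p :: ('k::comm_monoid_add \<Rightarrow>\<^sub>0 'b::comm_ring_1)))"
  by (simp add: additive_def distrib_left)

lemma actS_add: "actS g (p + q) = actS g p + actS g q"
  using actS_additive[of g] unfolding additive_def by blast

lemma actS_mult: "actS g (p * q) = actS g p * actS g q"
proof -
  have "actS g (Poly_Mapping.single w a * q) = actS g (Poly_Mapping.single w a) * actS g q" for w a
  proof (rule additive_ext[where f="\<lambda>q. actS g (Poly_Mapping.single w a * q)" and g="\<lambda>q. actS g (Poly_Mapping.single w a) * actS g q"])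
    show "additive (\<lambda>q. actS g (Poly_Mapping.single w a * q))"
      unfolding additive_def by (simp only: distrib_left actS_add simp_thms)
    show "additive (\<lambda>q. actS g (Poly_Mapping.single w a) * actS g q)"
      unfolding additive_def by (simp only: distrib_left actS_add simp_thms)
    show "actS g (Poly_Mapping.single w a * Poly_Mapping.single v b) =
          actS g (Poly_Mapping.single w a) * actS g (Poly_Mapping.single v b)" for v b
      by (simp only: mult_single actS_single monoS_add const_mult mult.assoc mult.left_commute)
  qed
  note H = this
  have F: "additive (\<lambda>p. actS g (p * q))"
    unfolding additive_def by (simp only: distrib_right actS_add simp_thms)
  have G: "additive (\<lambda>p. actS g p * actS g q)"
    unfolding additive_def by (simp only: distrib_right actS_add simp_thms)
  show ?thesis by (rule additive_ext[OF F G]) (rule H)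
qed

lemma actS_sum: "actS g (sum f A) = (\<Sum>a\<in>A. actS g (f a))"
  by (rule additive_sum[OF actS_additive])

lemma monoS_0: "monoS g 0 = 1"
  by (simp add: monoS_def)

lemma actS_const: "actS g (const c) = const c"
proof -
  have "actS g (const c) = const c * monoS g 0"
    using actS_single[of g 0 c] by (simp only: const_def)
  then show ?thesis by (simp only: monoS_0 mult_1_right)
qed

lemma actS_const_mult: "actS g (const c * p) = const c * actS g p"
  by (simp only: actS_mult actS_const)


definition cf :: "('n::finite \<Rightarrow>\<^sub>0 nat) \<Rightarrow> ('n \<Rightarrow>\<^sub>0 nat) \<Rightarrow> 'a::field_char_0" where
  "cf w u = (\<Prod>k\<in>UNIV. of_nat (fact (Poly_Mapping.lookup w k)) /
                           of_nat (fact (Poly_Mapping.lookup w k - Poly_Mapping.lookup u k)))"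

lemma dmono_alt: "dmono u p = (\<Sum>w\<in>Poly_Mapping.keys p.
      (\<lambda>w a. if (\<forall>k. Poly_Mapping.lookup u k \<le> Poly_Mapping.lookup w k)
      then Poly_Mapping.single (w - u) (a * cf w u) else 0) w (Poly_Mapping.lookup p w))"
  unfolding dmono_def cf_def by (rule sum.cong) auto

lemma dmono_additive: "additive (dmono u)"
  unfolding additive_def dmono_alt
  by (intro allI lin_add) (auto simp: distrib_right single_add)

lemma dmono_single: "dmono u (Poly_Mapping.single w a) =
   (if (\<forall>k. Poly_Mapping.lookup u k \<le> Poly_Mapping.lookup w k) then Poly_Mapping.single (w - u) (a * cf w u) else 0)"
  unfolding dmono_alt by (subst lin_single) auto

lemma dop_alt: "dop s p = (\<Sum>u\<in>Poly_Mapping.keys s. (\<lambda>u a. const a * dmono u p) u (Poly_Mapping.lookup s u))"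
  by (simp add: dop_def)

lemma dmono_add: "dmono u (p + q) = dmono u p + dmono u q"
  using dmono_additive[of u] unfolding additive_def by blast

lemma dmono_zero: "dmono u 0 = 0"
  by (simp add: dmono_def)

lemma dop_additive1: "additive (\<lambda>s. dop s p)"
  unfolding additive_def dop_alt
  by (intro allI lin_add) (auto simp: distrib_right const_add)

lemma dop_additive2: "additive (dop s)"
proof -
  show ?thesis unfolding additive_def dop_def
    by (simp add: distrib_left sum.distrib dmono_add)
qed

lemma dop_add1: "dop (s + t) p = dop s p + dop t p"
  using dop_additive1[of p] unfolding additive_def by blast
lemma dop_add2: "dop s (p + q) = dop s p + dop s q"
  using dop_additive2[of s] unfolding additive_def by blast

lemma dop_single: "dop (Poly_Mapping.single u a) p = const a * dmono u p"
  unfolding dop_alt by (subst lin_single) auto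

lemma additive_uminus:
  fixes f :: "('k \<Rightarrow>\<^sub>0 'b::ab_group_add) \<Rightarrow> 'c::ab_group_add"
  assumes "additive f" shows "f (- p) = - f p"
proof -
  have "f (p + - p) = f p + f (- p)" using assms unfolding additive_def by blast
  then have "f p + f (- p) = 0" using additive_zero[OF assms] by simp
  then show ?thesis by (simp add: eq_neg_iff_add_eq_0 add.commute)
qed

lemma dmono_const_mult: "dmono u (const c * p) = const c * dmono u p"
proof (rule additive_ext[where f="\<lambda>p. dmono u (const c * p)" and g="\<lambda>p. const c * dmono u p"])
  show "additive (\<lambda>p. dmono u (const c * p))"
    unfolding additive_def by (simp only: distrib_left dmono_add simp_thms)
  show "additive (\<lambda>p. const c * dmono u p)"
    unfolding additive_def by (simp only: distrib_left dmono_add simp_thms)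
  fix w a
  show "dmono u (const c * Poly_Mapping.single w a) = const c * dmono u (Poly_Mapping.single w a)"
    by (simp only: const_mult_single dmono_single if_distrib[of "\<lambda>x. const c * x"] mult_zero_right mult.assoc)
qed

lemma fact_ratio:
  fixes W V U :: nat
  assumes "V \<le> W" "U \<le> W - V"
  shows "(of_nat (fact W) / of_nat (fact (W - V)) :: 'a::field_char_0) * (of_nat (fact (W - V)) / of_nat (fact (W - V - U)))
        = of_nat (fact W) / of_nat (fact (W - (U + V)))"
proof -
  have e: "W - V - U = W - (U + V)" by simp
  have nz: "(of_nat (fact (W - V)) :: 'a) \<noteq> 0" by simp
  show ?thesis unfolding e using nz by (simp add: divide_simps)
qed

lemma cf_comp:
  assumes "\<forall>k. Poly_Mapping.lookup v k \<le> Poly_Mapping.lookup w k"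
    "\<forall>k. Poly_Mapping.lookup u k \<le> Poly_Mapping.lookup w k - Poly_Mapping.lookup v k"
  shows "(cf w v * cf (w - v) u :: 'a::field_char_0) = cf w (u + v)"
  unfolding cf_def prod.distrib[symmetric]
proof (rule prod.cong[OF refl])
  fix k
  have l1: "Poly_Mapping.lookup (w - v) k = Poly_Mapping.lookup w k - Poly_Mapping.lookup v k" by (rule lookup_minus)
  have l2: "Poly_Mapping.lookup (u + v) k = Poly_Mapping.lookup u k + Poly_Mapping.lookup v k" by (rule lookup_add)
  show "(of_nat (fact (Poly_Mapping.lookup w k)) / of_nat (fact (Poly_Mapping.lookup w k - Poly_Mapping.lookup v k)) :: 'a) *
         (of_nat (fact (Poly_Mapping.lookup (w - v) k)) / of_nat (fact (Poly_Mapping.lookup (w - v) k - Poly_Mapping.lookup u k))) =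
         of_nat (fact (Poly_Mapping.lookup w k)) / of_nat (fact (Poly_Mapping.lookup w k - Poly_Mapping.lookup (u + v) k))"
    unfolding l1 l2 using assms by (intro fact_ratio) auto
qed

lemma dmono_dmono:
  fixes p :: "('n::finite, 'a::field_char_0) spoly"
  shows "dmono u (dmono v p) = dmono (u + v) p"
proof (rule additive_ext[where f="\<lambda>p. dmono u (dmono v p)" and g="dmono (u+v)"])
  show "additive (\<lambda>p. dmono u (dmono v p))" by (simp add: additive_def dmono_add)
  show "additive (dmono (u + v))" by (rule dmono_additive)
  fix w a
  show "dmono u (dmono v (Poly_Mapping.single w a)) = dmono (u + v) (Poly_Mapping.single w a)"
  proof (cases "\<forall>k. Poly_Mapping.lookup v k \<le> Poly_Mapping.lookup w k")
    case True
    have eqv: "(\<forall>k. Poly_Mapping.lookup u k \<le> Poly_Mapping.lookup (w - v) k) \<longleftrightarrow>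
          (\<forall>k. Poly_Mapping.lookup (u + v) k \<le> Poly_Mapping.lookup w k)"
      using True by (auto simp: lookup_minus lookup_add) (metis le_diff_conv2)+
    have wv: "w - v - u = w - (u + v)"
      by (rule poly_mapping_eqI) (simp add: lookup_minus lookup_add)
    show ?thesis
    proof (cases "\<forall>k. Poly_Mapping.lookup u k \<le> Poly_Mapping.lookup (w - v) k")
      case True2: True
      have hcf: "cf w v * cf (w - v) u = cf w (u + v)"
        using True True2 by (intro cf_comp) (auto simp: lookup_minus)
      have c3: "\<forall>k. Poly_Mapping.lookup (u + v) k \<le> Poly_Mapping.lookup w k" using eqv True2 by blast
      have "dmono u (dmono v (Poly_Mapping.single w a)) = dmono u (Poly_Mapping.single (w - v) (a * cf w v))"
        by (simp only: dmono_single if_P[OF True])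
      also have "\<dots> = Poly_Mapping.single (w - v - u) (a * cf w v * cf (w - v) u)"
        by (simp only: dmono_single if_P[OF True2])
      also have "\<dots> = Poly_Mapping.single (w - (u + v)) (a * cf w (u + v))"
        by (simp only: wv mult.assoc hcf)
      also have "\<dots> = dmono (u + v) (Poly_Mapping.single w a)"
        by (simp only: dmono_single if_P[OF c3])
      finally show ?thesis .
    next
      case False
      have c3: "\<not> (\<forall>k. Poly_Mapping.lookup (u + v) k \<le> Poly_Mapping.lookup w k)" using eqv False by blast
      have "dmono u (dmono v (Poly_Mapping.single w a)) = dmono u (Poly_Mapping.single (w - v) (a * cf w v))"
        by (simp only: dmono_single if_P[OF True])
      also have "\<dots> = 0"
        by (simp only: dmono_single if_not_P[OF False])
      also have "\<dots> = dmono (u + v) (Poly_Mapping.single w a)"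
        by (simp only: dmono_single if_not_P[OF c3])
      finally show ?thesis .
    qed
  next
    case False
    then obtain k where "\<not> Poly_Mapping.lookup v k \<le> Poly_Mapping.lookup w k" by blast
    then have "\<not> Poly_Mapping.lookup (u + v) k \<le> Poly_Mapping.lookup w k" by (simp only: lookup_add) 
    then have "\<not> (\<forall>k. Poly_Mapping.lookup (u + v) k \<le> Poly_Mapping.lookup w k)" by blast
    then show ?thesis
      by (simp only: dmono_single if_False if_not_P[OF False] if_not_P[OF \<open>\<not> (\<forall>k. Poly_Mapping.lookup (u + v) k \<le> Poly_Mapping.lookup w k)\<close>] dmono_zero)
  qed
qed

lemma dop_dop: "dop s (dop t p) = dop (s * t) p"
proof -
  have A1: "additive (\<lambda>s. dop s p)" for p by (rule dop_additive1)
  have A2: "additive (dop s)" for s by (rule dop_additive2)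
  have "dop (Poly_Mapping.single u a) (dop t p) = dop (Poly_Mapping.single u a * t) p" for u a
  proof (rule additive_ext[where f="\<lambda>t. dop (Poly_Mapping.single u a) (dop t p)" and g="\<lambda>t. dop (Poly_Mapping.single u a * t) p"])
    show "additive (\<lambda>t. dop (Poly_Mapping.single u a) (dop t p))"
      unfolding additive_def by (simp only: dop_add1 dop_add2 simp_thms)
    show "additive (\<lambda>t. dop (Poly_Mapping.single u a * t) p)"
      unfolding additive_def by (simp only: distrib_left dop_add1 simp_thms)
    show "dop (Poly_Mapping.single u a) (dop (Poly_Mapping.single v b) p) =
          dop (Poly_Mapping.single u a * Poly_Mapping.single v b) p" for v b
      by (simp only: dop_single mult_single dmono_const_mult dmono_dmono const_mult mult.assoc)
  qed
  note H = this
  have F: "additive (\<lambda>s. dop s (dop t p))"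
    unfolding additive_def by (simp only: dop_add1 simp_thms)
  have G: "additive (\<lambda>s. dop (s * t) p)"
    unfolding additive_def by (simp only: distrib_right dop_add1 simp_thms)
  show ?thesis by (rule additive_ext[OF F G]) (rule H)
qed

lemma dop_comm: "dop s (dop t p) = dop t (dop s p)"
  by (simp only: dop_dop mult.commute)



lemma pairing_invariant:
  fixes S T s t :: "'m::finite \<Rightarrow> ('n, 'a::comm_ring_1) spoly" and A B :: "'m \<Rightarrow> 'm \<Rightarrow> 'a"
  assumes hs: "\<And>l. s l = (\<Sum>k\<in>UNIV. const (A k l) * S k)"
    and ht: "\<And>l. t l = (\<Sum>k\<in>UNIV. const (B l k) * T k)"
    and hm: "\<And>k k'. (\<Sum>l\<in>UNIV. A k l * B l k') = mid k k'"
  shows "(\<Sum>l\<in>UNIV. s l * t l) = (\<Sum>k\<in>UNIV. S k * T k)"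
proof -
  have r: "(a * x) * (b * y) = (a * b) * (x * y)" for a b x y :: "('n, 'a) spoly"
    by (simp only: mult_ac)
  have "(\<Sum>l\<in>UNIV. s l * t l) = (\<Sum>l\<in>UNIV. \<Sum>k\<in>UNIV. \<Sum>k'\<in>UNIV. const (A k l * B l k') * (S k * T k'))"
    by (simp only: hs ht sum_product const_mult r)
  also have "\<dots> = (\<Sum>k\<in>UNIV. \<Sum>k'\<in>UNIV. \<Sum>l\<in>UNIV. const (A k l * B l k') * (S k * T k'))"
    by (subst sum.swap, rule sum.cong[OF refl], rule sum.swap)
  also have "\<dots> = (\<Sum>k\<in>UNIV. \<Sum>k'\<in>UNIV. const (mid k k') * (S k * T k'))"
  proof (rule sum.cong[OF refl], rule sum.cong[OF refl])
    fix k k'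
    show "(\<Sum>l\<in>UNIV. const (A k l * B l k') * (S k * T k')) = const (mid k k') * (S k * T k')"
      by (simp only: sum_distrib_right[symmetric] const_sum[symmetric] hm)
  qed
  also have "\<dots> = (\<Sum>k\<in>UNIV. S k * T k)"
  proof (rule sum.cong[OF refl])
    fix k
    have "(\<Sum>k'\<in>UNIV. const (mid k k') * (S k * T k')) = (\<Sum>k'\<in>UNIV. if k = k' then S k * T k' else 0)"
      by (rule sum.cong[OF refl]) (simp add: mid_def)
    also have "\<dots> = S k * T k" by (simp only: sum.delta' finite UNIV_I if_True)
    finally show "(\<Sum>k'\<in>UNIV. const (mid k k') * (S k * T k')) = S k * T k" .
  qed
  finally show ?thesis .
qed

lemma mmult_assoc: "mmult (mmult A B) C = mmult A (mmult B C)"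
proof (rule ext)+
  fix i j
  have "mmult (mmult A B) C i j = (\<Sum>l\<in>UNIV. \<Sum>m\<in>UNIV. A i m * B m l * C l j)"
    unfolding mmult_def by (simp only: sum_distrib_right)
  also have "\<dots> = (\<Sum>m\<in>UNIV. \<Sum>l\<in>UNIV. A i m * B m l * C l j)"
    by (rule sum.swap)
  also have "\<dots> = mmult A (mmult B C) i j"
    unfolding mmult_def by (simp only: sum_distrib_left mult.assoc)
  finally show "mmult (mmult A B) C i j = mmult A (mmult B C) i j" .
qed

lemma mmult_mid_left[simp]: "mmult mid A = A"
proof (rule ext)+
  fix i j
  have "(\<Sum>l\<in>UNIV. mid i l * A l j) = (\<Sum>l\<in>UNIV. if i = l then A l j else 0)" by (rule sum.cong) (auto simp: mid_def)
  then show "mmult mid A i j = A i j" by (simp add: mmult_def)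
qed
lemma mmult_mid_right[simp]: "mmult A mid = A"
proof (rule ext)+
  fix i j
  have "(\<Sum>l\<in>UNIV. A i l * mid l j) = (\<Sum>l\<in>UNIV. if l = j then A i l else 0)" by (rule sum.cong) (auto simp: mid_def)
  then show "mmult A mid i j = A i j" by (simp add: mmult_def)
qed

lemma ginv_props:
  assumes "matrix_group G" "g \<in> G"
  shows "ginv G g \<in> G \<and> mmult g (ginv G g) = mid \<and> mmult (ginv G g) g = mid"
proof -
  obtain h where h: "h \<in> G" "mmult g h = mid" "mmult h g = mid"
    using assms unfolding matrix_group_def by blast
  have "\<exists>!h. h \<in> G \<and> mmult g h = mid \<and> mmult h g = mid"
  proof (rule ex1I[of _ h])
    show "h \<in> G \<and> mmult g h = mid \<and> mmult h g = mid" using h by blast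
    fix h' assume "h' \<in> G \<and> mmult g h' = mid \<and> mmult h' g = mid"
    then have "h' = mmult h' (mmult g h)" using h by simp
    also have "\<dots> = mmult (mmult h' g) h" by (simp add: mmult_assoc)
    also have "\<dots> = h" using \<open>h' \<in> G \<and> mmult g h' = mid \<and> mmult h' g = mid\<close> by simp
    finally show "h' = h" .
  qed
  then show ?thesis unfolding ginv_def by (rule theI')
qed



lemma neg1_sq: "((-1::'r::comm_ring_1) ^ n) * (-1) ^ n = 1"
  by (simp add: power_mult_distrib[symmetric])

lemma esign_sq: "(esign k I :: ('n::finite,'a::comm_ring_1) spoly) * esign k I = 1"
  unfolding esign_def by (rule neg1_sq)

lemma esign_insert:
  assumes "l \<notin> I"
  shows "(esign k (insert l I) :: ('n::finite,'a::comm_ring_1) spoly) = (if l < k then - esign k I else esign k I)"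
proof (cases "l < k")
  case True
  then have s: "{m\<in>insert l I. m < k} = insert l {m\<in>I. m < k}" by auto
  have c: "card (insert l {m\<in>I. m < k}) = Suc (card {m\<in>I. m < k})" using assms by simp
  show ?thesis unfolding esign_def s c using True by (simp only: power_Suc if_True mult_minus1)
next
  case False
  then have "{m\<in>insert l I. m < k} = {m\<in>I. m < k}" by auto
  then show ?thesis unfolding esign_def using False by (simp only: if_False)
qed

lemma dop_uminus: "dop s (- p) = - dop s p"
  by (rule additive_uminus[OF dop_additive2])

lemma neg1_suc: "((-1::'r::comm_ring_1) ^ Suc n) * p = - ((-1) ^ n * p)"
  by simp

lemma dop_neg1pow: "dop s ((-1) ^ n * p) = (-1) ^ n * dop s p"
proof (induction n)
  case 0
  then show ?case by (simp only: power_0 mult_1_left)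
next
  case (Suc n)
  then show ?case by (simp only: neg1_suc dop_uminus)
qed

lemma dop_sign: "dop s (esign k I * p) = esign k I * dop s p"
  unfolding esign_def by (rule dop_neg1pow)

lemma pointwise_gen:
  fixes D :: "'m::{finite,linorder} \<Rightarrow> 'm \<Rightarrow> 'm set \<Rightarrow> 'r::comm_ring_1" and e :: "'m \<Rightarrow> 'm set \<Rightarrow> 'r"
  assumes esq: "\<And>k I. e k I * e k I = 1"
    and eins: "\<And>k l I. l \<notin> I \<Longrightarrow> e k (insert l I) = (if l < k then - e k I else e k I)"
  shows "(if k \<in> J \<and> l \<notin> J - {k} then e k (J - {k}) * e l (J - {k}) * D k l (insert l (J - {k})) else 0)
       + (if l \<notin> J \<and> k \<in> insert l J then e l J * e k (insert l J - {k}) * D k l (insert l J - {k}) else 0)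
       = (if k = l then D k k J else 0)"
proof (cases "k = l")
  case True
  then have kl: "l = k" by simp
  show ?thesis
  proof (cases "k \<in> J")
    case kJ: True
    have i1: "insert k (J - {k}) = J" using kJ by blast
    have c1: "(k \<in> J \<and> k \<notin> J - {k}) = True" using kJ by blast
    have c2: "(k \<notin> J \<and> k \<in> insert k J) = False" using kJ by blast
    show ?thesis unfolding kl by (simp only: c1 c2 i1 if_True if_False esq mult_1_left add_0_right refl)
  next
    case kJ: False
    have i1: "insert k J - {k} = J" using kJ by blast
    have c1: "(k \<in> J \<and> k \<notin> J - {k}) = False" using kJ by blast
    have c2: "(k \<notin> J \<and> k \<in> insert k J) = True" using kJ by blast
    show ?thesis unfolding kl by (simp only: c1 c2 i1 if_True if_False esq mult_1_left add_0_left refl)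
  qed
next
  case False
  have ne: "(k = l) = False" using False by simp
  show ?thesis
  proof (cases "k \<in> J \<and> l \<notin> J")
    case True
    have J: "insert k (J - {k}) = J" using True by auto
    have Y: "insert l J - {k} = insert l (J - {k})" using False by auto
    have e1': "e l (insert k (J - {k})) = (if k < l then - e l (J - {k}) else e l (J - {k}))"
      by (rule eins) simp
    have e1: "e l J = (if k < l then - e l (J - {k}) else e l (J - {k}))"
      using e1' by (simp only: J)
    have e2: "e k (insert l (J - {k})) = (if l < k then - e k (J - {k}) else e k (J - {k}))"
      using True by (intro eins) simp
    have c1: "(k \<in> J \<and> l \<notin> J - {k}) = True" "(l \<notin> J \<and> k \<in> insert l J) = True" using True by auto
    have key: "e l J * e k (insert l (J - {k})) = - (e l (J - {k}) * e k (J - {k}))"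
    proof (cases "k < l")
      case True
      then have "\<not> l < k" by simp
      then show ?thesis unfolding e1 e2 using True by simp
    next
      case False2: False
      then have "l < k" using False by simp
      then show ?thesis unfolding e1 e2 using False2 by simp
    qed
    have "e l J * e k (insert l J - {k}) * D k l (insert l J - {k}) =
       - (e k (J - {k}) * e l (J - {k}) * D k l (insert l (J - {k})))"
      unfolding Y key by (simp only: minus_mult_left mult.commute[of "e l (J - {k})" "e k (J - {k})"])
    then show ?thesis by (simp only: c1 if_True ne if_False) simp
  next
    case False2: False
    have c1: "(k \<in> J \<and> l \<notin> J - {k}) = False" using False2 False by blast
    have c2: "(l \<notin> J \<and> k \<in> insert l J) = False" using False2 False by blast
    show ?thesis by (simp only: c1 c2 if_False ne add_0_left)
  qed
qed

lemma pointwise: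
  fixes D :: "'m::{finite,linorder} \<Rightarrow> 'm \<Rightarrow> 'm set \<Rightarrow> ('n::finite,'a::comm_ring_1) spoly"
  shows "(if k \<in> J \<and> l \<notin> J - {k} then esign k (J - {k}) * esign l (J - {k}) * D k l (insert l (J - {k})) else 0)
       + (if l \<notin> J \<and> k \<in> insert l J then esign l J * esign k (insert l J - {k}) * D k l (insert l J - {k}) else 0)
       = (if k = l then D k k J else 0)"
  by (rule pointwise_gen[where e=esign]) (rule esign_sq, erule esign_insert)



lemma dop_sum: "dop s (sum f A) = (\<Sum>a\<in>A. dop s (f a))"
  by (rule additive_sum[OF dop_additive2])
lemma dop_sum1: "dop (sum f A) p = (\<Sum>a\<in>A. dop (f a) p)"
  by (rule additive_sum[OF dop_additive1])
lemma dop_zero: "dop s 0 = 0"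
  by (rule additive_zero[OF dop_additive2])
lemma dop_if0: "dop s (if c then a else 0) = (if c then dop s a else 0)"
  by (simp add: dop_zero)


lemma A_expand:
  fixes s t :: "'m::{finite,linorder} \<Rightarrow> ('n::finite, 'a::field_char_0) spoly" and x :: "'m set \<Rightarrow> ('n, 'a) spoly"
  and D :: "'m \<Rightarrow> 'm \<Rightarrow> 'm set \<Rightarrow> ('n, 'a) spoly"
  assumes D_def: "D = (\<lambda>k l Y. dop (s k) (dop (t l) (x Y)))"
  shows "dstar s (deltastar t x) J = (\<Sum>k\<in>UNIV. \<Sum>l\<in>UNIV.
        (if k \<in> J \<and> l \<notin> J - {k} then esign k (J - {k}) * esign l (J - {k}) * D k l (insert l (J - {k})) else 0))"
      unfolding dstar_def deltastar_def op_eps_def op_iota_def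
      apply (rule sum.cong[OF refl])
      apply (simp only: dop_sum dop_if0 dop_sign)
      apply (simp add: sum_distrib_left D_def mult.assoc if_distrib[of "\<lambda>z. _ * z"] cong: if_cong)
      done

lemma B_expand:
  fixes s t :: "'m::{finite,linorder} \<Rightarrow> ('n::finite, 'a::field_char_0) spoly" and x :: "'m set \<Rightarrow> ('n, 'a) spoly"
  and D :: "'m \<Rightarrow> 'm \<Rightarrow> 'm set \<Rightarrow> ('n, 'a) spoly"
  assumes D_def: "D = (\<lambda>k l Y. dop (s k) (dop (t l) (x Y)))"
  shows "deltastar t (dstar s x) J = (\<Sum>l\<in>UNIV. \<Sum>k\<in>UNIV.
        (if l \<notin> J \<and> k \<in> insert l J then esign l J * esign k (insert l J - {k}) * D k l (insert l J - {k}) else 0))"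
      unfolding dstar_def deltastar_def op_eps_def op_iota_def
      apply (rule sum.cong[OF refl])
      apply (simp only: dop_sum dop_if0 dop_sign)
      apply (simp add: sum_distrib_left D_def mult.assoc if_distrib[of "\<lambda>z. _ * z"] dop_comm[of "t _"] cong: if_cong)
      done

theorem lemma5p5:
  fixes G :: "('n::finite \<Rightarrow> 'n \<Rightarrow> 'a::field_char_0) set"
    and \<rho> :: "('n \<Rightarrow> 'n \<Rightarrow> 'a) \<Rightarrow> ('m::{finite,linorder} \<Rightarrow> 'm \<Rightarrow> 'a)"
    and \<omega>Md :: "'m \<Rightarrow> 'm \<Rightarrow> ('n, 'a) spoly"
    and \<omega>M :: "'m \<Rightarrow> 'm \<Rightarrow> ('n, 'a) spoly"
  assumes "finite G"
    and "matrix_group G"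
    and "G = generated {g\<in>G. pseudo_reflection g}"
    and "representation G \<rho>"
    and "homogeneous_basis (invariants G) {s. \<forall>g\<in>G. actSMd G \<rho> g s = s} \<omega>Md"
    and "homogeneous_basis (invariants G) {t. \<forall>g\<in>G. actSM \<rho> g t = t} \<omega>M"
  shows "\<forall>i j. \<exists>L\<in>invariants G. \<forall>x.
           (\<lambda>J. dstar (\<omega>Md i) (deltastar (\<omega>M j) x) J + deltastar (\<omega>M j) (dstar (\<omega>Md i) x) J)
           = (\<lambda>J. dop L (x J))"
proof (intro allI)
  fix i j
  define s where "s = \<omega>Md i"
  define t where "t = \<omega>M j"
  define L where "L = (\<Sum>k\<in>UNIV. s k * t k)"
  have sX: "\<forall>g\<in>G. actSMd G \<rho> g s = s" using assms(5) unfolding homogeneous_basis_def s_def by blast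
  have tX: "\<forall>g\<in>G. actSM \<rho> g t = t" using assms(6) unfolding homogeneous_basis_def t_def by blast
  have Linv: "L \<in> invariants G"
    unfolding invariants_def
  proof (intro CollectI ballI)
    fix g assume g: "g \<in> G"
    define h where "h = ginv G g"
    from ginv_props[OF assms(2) g] have h: "h \<in> G" "mmult h g = mid" unfolding h_def by auto
    have r1: "\<rho> mid = mid" using assms(4) unfolding representation_def by blast
    have r2: "\<rho> (mmult h g) = mmult (\<rho> h) (\<rho> g)" using assms(4) h(1) g unfolding representation_def by blast
    have rep: "mmult (\<rho> h) (\<rho> g) = mid" using r1 r2 h(2) by simp
    have es: "actSMd G \<rho> g s = s" using sX g by blast
    have et: "actSM \<rho> g t = t" using tX g by blast
    have hs: "s l = (\<Sum>k\<in>UNIV. const (\<rho> h k l) * actS g (s k))" for l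
    proof -
      have "(\<Sum>k\<in>UNIV. const (\<rho> (ginv G g) k l) * actS g (s k)) = s l"
        using fun_cong[OF es, of l] unfolding actSMd_def .
      then show ?thesis unfolding h_def by (rule sym)
    qed
    have ht: "t l = (\<Sum>k\<in>UNIV. const (\<rho> g l k) * actS g (t k))" for l
    proof -
      have "(\<Sum>k\<in>UNIV. const (\<rho> g l k) * actS g (t k)) = t l"
        using fun_cong[OF et, of l] unfolding actSM_def .
      then show ?thesis by (rule sym)
    qed
    have hm: "(\<Sum>l\<in>UNIV. \<rho> h k l * \<rho> g l k') = mid k k'" for k k'
      using fun_cong[OF fun_cong[OF rep, of k], of k'] unfolding mmult_def by simp
    have "L = (\<Sum>k\<in>UNIV. actS g (s k) * actS g (t k))"
      unfolding L_def by (rule pairing_invariant[OF hs ht hm])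
    also have "\<dots> = actS g L" unfolding L_def by (simp only: actS_sum actS_mult)
    finally show "actS g L = L" by (rule sym)
  qed
  show "\<exists>L\<in>invariants G. \<forall>x.
           (\<lambda>J. dstar (\<omega>Md i) (deltastar (\<omega>M j) x) J + deltastar (\<omega>M j) (dstar (\<omega>Md i) x) J)
           = (\<lambda>J. dop L (x J))"
  proof (intro bexI[OF _ Linv] allI ext)
    fix x :: "'m set \<Rightarrow> ('n, 'a) spoly" and J :: "'m set"
    define D where "D = (\<lambda>k l Y. dop (s k) (dop (t l) (x Y)))"
    have A: "dstar s (deltastar t x) J = (\<Sum>k\<in>UNIV. \<Sum>l\<in>UNIV.
        (if k \<in> J \<and> l \<notin> J - {k} then esign k (J - {k}) * esign l (J - {k}) * D k l (insert l (J - {k})) else 0))"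
      by (rule A_expand[OF D_def])
    have B: "deltastar t (dstar s x) J = (\<Sum>l\<in>UNIV. \<Sum>k\<in>UNIV.
        (if l \<notin> J \<and> k \<in> insert l J then esign l J * esign k (insert l J - {k}) * D k l (insert l J - {k}) else 0))"
      by (rule B_expand[OF D_def])
    have B': "deltastar t (dstar s x) J = (\<Sum>k\<in>UNIV. \<Sum>l\<in>UNIV.
        (if l \<notin> J \<and> k \<in> insert l J then esign l J * esign k (insert l J - {k}) * D k l (insert l J - {k}) else 0))"
      unfolding B by (rule sum.swap)
    have "dstar s (deltastar t x) J + deltastar t (dstar s x) J =
        (\<Sum>k\<in>UNIV. \<Sum>l\<in>UNIV.
        (if k \<in> J \<and> l \<notin> J - {k} then esign k (J - {k}) * esign l (J - {k}) * D k l (insert l (J - {k})) else 0)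
       + (if l \<notin> J \<and> k \<in> insert l J then esign l J * esign k (insert l J - {k}) * D k l (insert l J - {k}) else 0))"
      unfolding A B' by (simp only: sum.distrib)
    also have "\<dots> = (\<Sum>k\<in>UNIV. \<Sum>l\<in>UNIV. (if k = l then D k k J else 0))"
      by (simp only: pointwise)
    also have "\<dots> = (\<Sum>k\<in>UNIV. D k k J)"
      by simp
    also have "\<dots> = dop L (x J)"
      unfolding D_def L_def by (simp only: dop_sum1 dop_dop)
    finally show "dstar (\<omega>Md i) (deltastar (\<omega>M j) x) J + deltastar (\<omega>M j) (dstar (\<omega>Md i) x) J = dop L (x J)"
      unfolding s_def t_def .
  qed
qed


end
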